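(* Let $G$ be a monomer graph with boundary atoms $v_0,v_{n-1}$, $G^p$ its polymer graph and $G^*$ its induced star-linking graph, all with the same initial node features, and fix an integer $d_{thres}\ge 1$. Assume that the graph distance in $G$ between $v_0$ and $v_{n-1}$ is larger than $2d_{thres}-1$. If a network consists of localized graph attention layers (with threshold $d_{thres}$), nodewise transformations, and concludes with a mean pooling, then its output on $G^p$ is identical to its output on $G^*$.
   Context: A monomer graph is $G=(V,E,\mathbf{X})$ with atoms $V=\{v_0,\dots,v_{n-1}\}$, bonds $E$, features $\mathbf{x}_i\in\mathbb{R}^d$ of $v_i$, and boundary atoms $v_0,v_{n-1}$. The polymer graph $G^p$ has nodes $v^p_i$, $i\in\mathbb{Z}$, with $v^p_i$ carrying the features of $v_{i\bmod n}$; its edges are $(v^p_{kn+a},v^p_{kn+b})$ for every $k\in\mathbb{Z}$ and every bond $(v_a,v_b)\in E$, plus $(v^p_{kn-1},v^p_{kn})$ for every $k\in\mathbb{Z}$. The induced star-linking graph $G^*$ has node set $V$, edge set $E\cup\{(v_0,v_{n-1})\}$ and the same features. Localized graph attention (LGA) with threshold $d_{thres}$: with learnable $\mathbf{W}^Q,\mathbf{W}^K,\mathbf{W}^V\in\mathbb{R}^{d\times d}$, set $\mathbf{q}_j=\mathbf{W}^Q\mathbf{x}_j$, $\mathbf{k}_i=\mathbf{W}^K\mathbf{x}_i$, $\mathbf{v}_i=\mathbf{W}^V\mathbf{x}_i$; for nodes $i,j$ with graph distance $d_{ij}$ and a shortest path $\mathbf{p}_{ij}$, the attention logit is $\mathbf{k}_i^T\mathbf{q}_j/\sqrt{d}+f_{dist}(d_{ij})+f_{path}(\mathbf{p}_{ij})$,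 where $f_{dist}, f_{path}$ are fixed scalar-valued functions ($f_{path}$ depending only on the node/edge attributes along the path); the weights $\hat A_{ij}$ are the softmax of these logits over the nodes $i$ with $d_{ij}<d_{thres}$ (and $\hat A_{ij}=0$ if $d_{ij}\ge d_{thres}$); the new feature of $j$ is $\mathbf{y}_j=\sum_i \hat A_{ij}\mathbf{v}_i$. A nodewise transformation applies a fixed function to each node feature independently (e.g. residual connections, layer normalization, feed-forward networks). Layers are applied identically on both graphs. Node features on $G^p$ remain $n$-periodic, and mean pooling on $G^p$ is the average over one period $v^p_0,\dots,v^p_{n-1}$; on $G^*$ it is the average over all nodes. *)

theory Defs
  imports "HOL-Analysis.Analysis" "HOL-Library.Extended_Nat"
begin

definition walk :: "('v \<Rightarrow> 'v \<Rightarrow> bool) \<Rightarrow> 'v list \<Rightarrow> bool" where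
  "walk adj p \<longleftrightarrow> p \<noteq> [] \<and> (\<forall>k. Suc k < length p \<longrightarrow> adj (p ! k) (p ! Suc k))"

text \<open>Graph distance (infinite if no walk exists).\<close>
definition gdist :: "('v \<Rightarrow> 'v \<Rightarrow> bool) \<Rightarrow> 'v \<Rightarrow> 'v \<Rightarrow> enat" where
  "gdist adj i j = (INF p \<in> {p. walk adj p \<and> hd p = i \<and> last p = j}. enat (length p - 1))"

definition path_attr ::
  "('v \<Rightarrow> 'f) \<Rightarrow> ('v \<Rightarrow> 'v \<Rightarrow> 'e) \<Rightarrow> 'v list \<Rightarrow> 'f list \<times> 'e list" where
  "path_attr x ea p = (map x p, map (\<lambda>(u, w). ea u w) (zip p (tl p)))"

definition sp_attrs ::
  "('v \<Rightarrow> 'v \<Rightarrow> bool) \<Rightarrow> ('v \<Rightarrow> 'v \<Rightarrow> 'e) \<Rightarrow> ('v \<Rightarrow> 'f) \<Rightarrow> 'v \<Rightarrow> 'v \<Rightarrow> ('f list \<times> 'e list) set" where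
  "sp_attrs adj ea x i j =
     path_attr x ea ` {p. walk adj p \<and> hd p = i \<and> last p = j \<and> enat (length p - 1) = gdist adj i j}"

datatype ('d, 'e) layer =
    LGA "real^'d^'d" "real^'d^'d" "real^'d^'d" "nat \<Rightarrow> real"
        "((real^'d) list \<times> 'e list) set \<Rightarrow> real"
    \<comment> \<open>W^Q, W^K, W^V, f_dist, f_path\<close>
  | Nodewise "real^'d \<Rightarrow> real^'d"

definition lga_nbhd :: "('v \<Rightarrow> 'v \<Rightarrow> bool) \<Rightarrow> nat \<Rightarrow> 'v \<Rightarrow> 'v set" where
  "lga_nbhd adj dthres j = {i. gdist adj i j < enat dthres}"

definition lga_logit ::
  "('v \<Rightarrow> 'v \<Rightarrow> bool) \<Rightarrow> ('v \<Rightarrow> 'v \<Rightarrow> 'e) \<Rightarrow> real^'d^'d \<Rightarrow> real^'d^'d \<Rightarrow> (nat \<Rightarrow> real)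
    \<Rightarrow> (((real^'d) list \<times> 'e list) set \<Rightarrow> real) \<Rightarrow> ('v \<Rightarrow> real^'d) \<Rightarrow> 'v \<Rightarrow> 'v \<Rightarrow> real" where
  "lga_logit adj ea WQ WK fdist fpath x i j =
     ((WK *v x i) \<bullet> (WQ *v x j)) / sqrt (real CARD('d))
     + fdist (the_enat (gdist adj i j)) + fpath (sp_attrs adj ea x i j)"

definition lga ::
  "('v \<Rightarrow> 'v \<Rightarrow> bool) \<Rightarrow> ('v \<Rightarrow> 'v \<Rightarrow> 'e) \<Rightarrow> nat \<Rightarrow> real^'d^'d \<Rightarrow> real^'d^'d \<Rightarrow> real^'d^'d
    \<Rightarrow> (nat \<Rightarrow> real) \<Rightarrow> (((real^'d) list \<times> 'e list) set \<Rightarrow> real)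
    \<Rightarrow> ('v \<Rightarrow> real^'d) \<Rightarrow> 'v \<Rightarrow> real^'d" where
  "lga adj ea dthres WQ WK WV fdist fpath x j =
     (let N = lga_nbhd adj dthres j;
          Z = (\<Sum>i'\<in>N. exp (lga_logit adj ea WQ WK fdist fpath x i' j))
      in \<Sum>i\<in>N. (exp (lga_logit adj ea WQ WK fdist fpath x i j) / Z) *\<^sub>R (WV *v x i))"

fun apply_layer ::
  "('v \<Rightarrow> 'v \<Rightarrow> bool) \<Rightarrow> ('v \<Rightarrow> 'v \<Rightarrow> 'e) \<Rightarrow> nat \<Rightarrow> ('d, 'e) layer
    \<Rightarrow> ('v \<Rightarrow> real^'d) \<Rightarrow> ('v \<Rightarrow> real^'d)" where
  "apply_layer adj ea dthres (LGA WQ WK WV fdist fpath) x = lga adj ea dthres WQ WK WV fdist fpath x"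
| "apply_layer adj ea dthres (Nodewise f) x = (\<lambda>v. f (x v))"

fun run_layers ::
  "('v \<Rightarrow> 'v \<Rightarrow> bool) \<Rightarrow> ('v \<Rightarrow> 'v \<Rightarrow> 'e) \<Rightarrow> nat \<Rightarrow> ('d, 'e) layer list
    \<Rightarrow> ('v \<Rightarrow> real^'d) \<Rightarrow> ('v \<Rightarrow> real^'d)" where
  "run_layers adj ea dthres [] x = x"
| "run_layers adj ea dthres (L # Ls) x = run_layers adj ea dthres Ls (apply_layer adj ea dthres L x)"

text \<open>Monomer graph on atoms 0..n-1 with (undirected) bond set E.\<close>
definition monomer_adj :: "(nat \<times> nat) set \<Rightarrow> nat \<Rightarrow> nat \<Rightarrow> bool" where
  "monomer_adj E a b \<longleftrightarrow> (a, b) \<in> E \<or> (b, a) \<in> E"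

definition polymer_edge :: "nat \<Rightarrow> (nat \<times> nat) set \<Rightarrow> int \<Rightarrow> int \<Rightarrow> bool" where
  "polymer_edge n E i j \<longleftrightarrow>
     (\<exists>k a b. (a, b) \<in> E \<and> i = k * int n + int a \<and> j = k * int n + int b)
   \<or> (\<exists>k. i = k * int n - 1 \<and> j = k * int n)"

definition polymer_adj :: "nat \<Rightarrow> (nat \<times> nat) set \<Rightarrow> int \<Rightarrow> int \<Rightarrow> bool" where
  "polymer_adj n E i j \<longleftrightarrow> polymer_edge n E i j \<or> polymer_edge n E j i"

definition polymer_feat :: "nat \<Rightarrow> (nat \<Rightarrow> 'f) \<Rightarrow> int \<Rightarrow> 'f" where
  "polymer_feat n X i = X (nat (i mod int n))"

definition polymer_eattr :: "nat \<Rightarrow> (nat \<Rightarrow> nat \<Rightarrow> 'e) \<Rightarrow> int \<Rightarrow> int \<Rightarrow> 'e" where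
  "polymer_eattr n ea i j = ea (nat (i mod int n)) (nat (j mod int n))"

definition star_adj :: "nat \<Rightarrow> (nat \<times> nat) set \<Rightarrow> nat \<Rightarrow> nat \<Rightarrow> bool" where
  "star_adj n E a b \<longleftrightarrow> monomer_adj E a b \<or> (a = 0 \<and> b = n - 1) \<or> (a = n - 1 \<and> b = 0)"

definition pool_polymer :: "nat \<Rightarrow> (int \<Rightarrow> real^'d) \<Rightarrow> real^'d" where
  "pool_polymer n y = (1 / real n) *\<^sub>R (\<Sum>i<n. y (int i))"

definition pool_star :: "nat \<Rightarrow> (nat \<Rightarrow> real^'d) \<Rightarrow> real^'d" where
  "pool_star n y = (1 / real n) *\<^sub>R (\<Sum>i<n. y i)"

end

theory Submission imports Defs begin

lemma walk_Cons: "walk adj (x # q) \<longleftrightarrow> (q = [] \<or> (adj x (hd q) \<and> walk adj q))"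
proof (cases q)
  case Nil then show ?thesis by (simp add: walk_def)
next
  case (Cons y ys)
  show ?thesis
  proof
    assume w: "walk adj (x # q)"
    have "adj x y" using w Cons unfolding walk_def by force
    moreover have "walk adj q" unfolding walk_def
    proof (intro conjI allI impI)
      show "q \<noteq> []" using Cons by simp
      fix k assume "Suc k < length q"
      then show "adj (q ! k) (q ! Suc k)" using w unfolding walk_def
        by (metis Suc_less_eq length_Cons nth_Cons_Suc)
    qed
    ultimately show "q = [] \<or> (adj x (hd q) \<and> walk adj q)" using Cons by simp
  next
    assume h: "q = [] \<or> (adj x (hd q) \<and> walk adj q)"
    then have a: "adj x (hd q)" and w: "walk adj q" using Cons by auto
    show "walk adj (x # q)" unfolding walk_def
    proof (intro conjI allI impI)
      show "x # q \<noteq> []" by simp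
      fix k assume k: "Suc k < length (x # q)"
      show "adj ((x # q) ! k) ((x # q) ! Suc k)"
      proof (cases k)
        case 0 then show ?thesis using a Cons by simp
      next
        case (Suc m) then show ?thesis using w k unfolding walk_def by simp
      qed
    qed
  qed
qed

lemma walk_single[simp]: "walk adj [x]" by (simp add: walk_def)

lemma walk_Cons2[simp]: "walk adj (x # y # ys) \<longleftrightarrow> adj x y \<and> walk adj (y # ys)"
  by (simp add: walk_Cons)

lemma walk_snoc: "walk adj q \<Longrightarrow> adj (last q) b \<Longrightarrow> walk adj (q @ [b])"
proof (induction q)
  case Nil then show ?case by (simp add: walk_def)
next
  case (Cons x q)
  show ?case
  proof (cases q)
    case Nil then show ?thesis using Cons by simp
  next
    fix y ys assume "q = y # ys"
    then show ?thesis using Cons by (auto simp: walk_Cons)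
  qed
qed

lemma walk_rev:
  assumes sym: "\<And>a b. adj a b \<Longrightarrow> adj b a" and "walk adj p"
  shows "walk adj (rev p)"
  using assms(2)
proof (induction p)
  case Nil then show ?case by (simp add: walk_def)
next
  case (Cons x q)
  show ?case
  proof (cases q)
    case Nil then show ?thesis by simp
  next
    case (Cons y ys)
    have "walk adj q" "adj x (hd q)" using Cons.prems Cons by (auto simp: walk_Cons)
    then have "walk adj (rev q)" using Cons.IH by simp
    moreover have "adj (last (rev q)) x" using \<open>adj x (hd q)\<close> Cons sym by (simp add: last_rev)
    ultimately show ?thesis using walk_snoc by fastforce
  qed
qed

lemma gdist_le:
  "walk adj p \<Longrightarrow> hd p = i \<Longrightarrow> last p = j \<Longrightarrow> gdist adj i j \<le> enat (length p - 1)"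
  unfolding gdist_def by (rule INF_lower) auto

lemma gdist_ex:
  assumes "gdist adj i j < \<infinity>"
  shows "\<exists>p. walk adj p \<and> hd p = i \<and> last p = j \<and> enat (length p - 1) = gdist adj i j"
proof -
  let ?A = "(\<lambda>p. enat (length p - 1)) ` {p. walk adj p \<and> hd p = i \<and> last p = j}"
  have "?A \<noteq> {}"
  proof
    assume "?A = {}"
    have "gdist adj i j = Inf ?A" unfolding gdist_def by simp
    also have "\<dots> = \<infinity>" by (metis \<open>?A = {}\<close> Inf_empty top_enat_def)
    finally have "gdist adj i j = \<infinity>" .
    then show False using assms by simp
  qed
  then have "Inf ?A \<in> ?A" unfolding Inf_enat_def by (auto intro: LeastI)
  then show ?thesis unfolding gdist_def by force
qed

lemma gdist_refl: "gdist adj i i = 0"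
  using gdist_le[of adj "[i]" i i] by (simp add: zero_enat_def[symmetric])


lemma gdist_less_walk:
  assumes "gdist adj i j < enat d"
  shows "\<exists>p. walk adj p \<and> hd p = i \<and> last p = j \<and> length p - 1 < d \<and> enat (length p - 1) = gdist adj i j"
proof -
  have "gdist adj i j < \<infinity>" by (rule order.strict_trans[OF assms]) simp
  then obtain p where p: "walk adj p" "hd p = i" "last p = j" "enat (length p - 1) = gdist adj i j"
    using gdist_ex[of adj i j] by blast
  have "enat (length p - 1) < enat d" unfolding p(4) by (rule assms)
  then have "length p - 1 < d" by simp
  then show ?thesis using p by blast
qed


lemma gdist_step:
  assumes "adj a b" shows "gdist adj i b \<le> gdist adj i a + 1"
proof (cases "gdist adj i a = \<infinity>")
  case True then show ?thesis by simp
next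
  case False
  then obtain p where p: "walk adj p" "hd p = i" "last p = a" "enat (length p - 1) = gdist adj i a"
    using gdist_ex[of adj i a] by auto
  have "p \<noteq> []" using p(1) by (simp add: walk_def)
  have "walk adj (p @ [b])" using walk_snoc[OF p(1)] p(3) assms by simp
  then have "gdist adj i b \<le> enat (length (p @ [b]) - 1)"
    using gdist_le[of adj "p @ [b]" i b] p \<open>p \<noteq> []\<close> by simp
  also have "\<dots> = enat (length p - 1) + 1" using \<open>p \<noteq> []\<close> by (cases p) (auto simp: one_enat_def)
  finally show ?thesis using p(4) by simp
qed

locale poly_setup =
  fixes n :: nat and E :: "(nat \<times> nat) set" and dthres :: nat
  assumes n2: "2 \<le> n" and Eb: "\<forall>(a, b) \<in> E. a < n \<and> b < n" and d1: "1 \<le> dthres"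
    and far: "gdist (monomer_adj E) 0 (n - 1) > enat (2 * dthres - 1)"
begin

definition pr :: "int \<Rightarrow> nat" where "pr i = nat (i mod int n)"
definition lv :: "int \<Rightarrow> int" where "lv i = i div int n"
definition M :: nat where "M = 2 * dthres - 1"
definition hn :: "nat \<Rightarrow> nat" where
  "hn a = (if gdist (monomer_adj E) 0 a \<le> enat M then the_enat (gdist (monomer_adj E) 0 a) else M)"
definition phi :: "int \<Rightarrow> int" where "phi i = lv i * int M + int (hn (pr i))"
definition w :: "nat \<Rightarrow> nat \<Rightarrow> int" where
  "w a b = (if a = n - 1 \<and> b = 0 then 1 else if a = 0 \<and> b = n - 1 then -1 else 0)"
definition nxt :: "int \<Rightarrow> nat \<Rightarrow> int" where "nxt i b = int n * (lv i + w (pr i) b) + int b"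

lemma M1: "1 \<le> M" using d1 by (simp add: M_def)

lemma noE: "(0, n - 1) \<notin> E \<and> (n - 1, 0) \<notin> E"
proof (rule ccontr)
  assume "\<not> ?thesis"
  then have "monomer_adj E 0 (n - 1)" by (auto simp: monomer_adj_def)
  then have "gdist (monomer_adj E) 0 (n - 1) \<le> enat 1"
    using gdist_le[of "monomer_adj E" "[0, n - 1]" 0 "n - 1"] by simp
  also have "\<dots> \<le> enat M" using M1 by simp
  finally show False using far by (simp add: M_def)
qed

lemma decomp: "i = int n * lv i + int (pr i)"
  using n2 by (simp add: pr_def lv_def)

lemma pr_lt: "pr i < n"
proof -
  have "i mod int n < int n" "0 \<le> i mod int n" using n2 by simp_all
  then show ?thesis unfolding pr_def by linarith
qed

lemma pr_lv_eq: "a < n \<Longrightarrow> pr (k * int n + int a) = a \<and> lv (k * int n + int a) = k"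
  using n2 by (simp add: pr_def lv_def)

lemma link_eq: "k * int n - 1 = (k - 1) * int n + int (n - 1)"
  using n2 by (simp add: algebra_simps of_nat_diff)

lemma pr_lv_link: "pr (k * int n - 1) = n - 1 \<and> lv (k * int n - 1) = k - 1"
proof -
  have "n - 1 < n" using n2 by simp
  then show ?thesis unfolding link_eq[of k] using pr_lv_eq[of "n - 1" "k - 1"] by blast
qed

lemma pr_lv_base: "pr (k * int n) = 0 \<and> lv (k * int n) = k"
  using pr_lv_eq[of 0 k] n2 by simp

lemma star_lt: "star_adj n E a b \<Longrightarrow> a < n \<and> b < n"
  using Eb n2 unfolding star_adj_def monomer_adj_def by auto

lemma P_sym: "polymer_adj n E i j \<Longrightarrow> polymer_adj n E j i"
  by (auto simp: polymer_adj_def)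

lemma S_sym: "star_adj n E a b \<Longrightarrow> star_adj n E b a"
  by (auto simp: star_adj_def monomer_adj_def)

lemma proj_edge: "polymer_edge n E i j \<Longrightarrow> star_adj n E (pr i) (pr j)"
proof -
  assume "polymer_edge n E i j"
  then consider (bond) k a b where "(a, b) \<in> E" "i = k * int n + int a" "j = k * int n + int b"
    | (link) k where "i = k * int n - 1" "j = k * int n"
    unfolding polymer_edge_def by blast
  then show ?thesis
  proof cases
    case bond
    then have "a < n" "b < n" using Eb by auto
    then show ?thesis using bond pr_lv_eq by (simp add: star_adj_def monomer_adj_def)
  next
    case link
    then show ?thesis using pr_lv_link pr_lv_base by (simp add: star_adj_def)
  qed
qed

lemma proj: "polymer_adj n E i j \<Longrightarrow> star_adj n E (pr i) (pr j)"
  unfolding polymer_adj_def using proj_edge S_sym by blast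

lemma lift:
  assumes "star_adj n E (pr i) b"
  shows "polymer_adj n E i (nxt i b) \<and> pr (nxt i b) = b"
proof -
  define a where "a = pr i"
  define k where "k = lv i"
  have i: "i = k * int n + int a" using decomp[of i] by (simp add: a_def k_def mult.commute)
  have b: "b < n" and a: "a < n" using star_lt assms a_def by auto
  have nx: "nxt i b = int n * (k + w a b) + int b" by (simp add: nxt_def a_def k_def)
  have ne: "n - 1 \<noteq> 0" using n2 by simp
  from assms consider "(a, b) \<in> E" | "(b, a) \<in> E" | "a = 0 \<and> b = n - 1" | "a = n - 1 \<and> b = 0"
    unfolding star_adj_def monomer_adj_def a_def by blast
  then have "polymer_adj n E i (nxt i b)"
  proof cases
    case 1
    have "(a, b) \<noteq> (n - 1, 0)" "(a, b) \<noteq> (0, n - 1)" using 1 noE by metis+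
    then have "w a b = 0" unfolding w_def by auto
    then have "nxt i b = k * int n + int b" using nx by (simp add: mult.commute)
    then show ?thesis using 1 i unfolding polymer_adj_def polymer_edge_def by blast
  next
    case 2
    have "(b, a) \<noteq> (n - 1, 0)" "(b, a) \<noteq> (0, n - 1)" using 2 noE by metis+
    then have "w a b = 0" unfolding w_def by auto
    then have "nxt i b = k * int n + int b" using nx by (simp add: mult.commute)
    then show ?thesis using 2 i unfolding polymer_adj_def polymer_edge_def by blast
  next
    case 3
    then have "w a b = -1" using ne by (auto simp: w_def)
    then have "nxt i b = k * int n - 1" using nx 3 n2 by (simp add: algebra_simps of_nat_diff)
    moreover have "i = k * int n" using i 3 by simp
    ultimately show ?thesis unfolding polymer_adj_def polymer_edge_def by blast
  next
    case 4
    then have "w a b = 1" by (auto simp: w_def)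
    then have "nxt i b = (k + 1) * int n" using nx 4 by (simp add: algebra_simps)
    moreover have "i = (k + 1) * int n - 1" using i 4 n2 by (simp add: algebra_simps of_nat_diff)
    ultimately show ?thesis unfolding polymer_adj_def polymer_edge_def by blast
  qed
  moreover have "pr (nxt i b) = b" using nx b pr_lv_eq[of b "k + w a b"] by (simp add: mult.commute)
  ultimately show ?thesis by simp
qed

end

context poly_setup begin

fun liftw :: "int \<Rightarrow> nat list \<Rightarrow> int list" where
  "liftw i [] = [i]"
| "liftw i (b # bs) = i # liftw (nxt i b) bs"

lemma liftw_props:
  "walk (star_adj n E) (pr i # bs) \<Longrightarrow>
   walk (polymer_adj n E) (liftw i bs) \<and> map pr (liftw i bs) = pr i # bs \<and> hd (liftw i bs) = i"
proof (induction bs arbitrary: i)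
  case Nil then show ?case by simp
next
  case (Cons b bs)
  have s: "star_adj n E (pr i) b" and w: "walk (star_adj n E) (b # bs)" using Cons.prems by auto
  have l: "polymer_adj n E i (nxt i b)" "pr (nxt i b) = b" using lift[OF s] by auto
  have "walk (star_adj n E) (pr (nxt i b) # bs)" using w l by simp
  note IH = Cons.IH[OF this]
  have "liftw (nxt i b) bs = nxt i b # tl (liftw (nxt i b) bs)" using IH
    by (metis list.collapse list.simps(8) list.discI)
  then show ?case using IH l by (metis liftw.simps(2) list.sel(1) list.simps(9) walk_Cons2)
qed

lemma proj_walk: "walk (polymer_adj n E) p \<Longrightarrow> walk (star_adj n E) (map pr p)"
proof (induction p)
  case Nil then show ?case by (simp add: walk_def)
next
  case (Cons x q)
  then show ?case by (cases q) (auto simp: proj)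
qed

lemma lift_back:
  assumes "walk (star_adj n E) q" "last q = pr jt"
  shows "\<exists>p. walk (polymer_adj n E) p \<and> last p = jt \<and> map pr p = q"
proof -
  have "q \<noteq> []" using assms by (simp add: walk_def)
  have rq: "walk (star_adj n E) (rev q)" using walk_rev[of "star_adj n E", OF S_sym assms(1)] by blast
  have "rev q = pr jt # tl (rev q)" using \<open>q \<noteq> []\<close> assms(2)
    by (metis hd_rev list.collapse Nil_is_rev_conv)
  then have "walk (star_adj n E) (pr jt # tl (rev q))" using rq by metis
  note L = liftw_props[OF this]
  let ?p = "rev (liftw jt (tl (rev q)))"
  have "walk (polymer_adj n E) ?p" using walk_rev[of "polymer_adj n E", OF P_sym] L by blast
  moreover have "liftw jt (tl (rev q)) \<noteq> []" using L by (auto simp: walk_def)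
  then have "last ?p = jt" using L by (simp add: last_rev)
  moreover have "map pr ?p = q" using L \<open>rev q = _\<close> by (metis rev_map rev_rev_ident)
  ultimately show ?thesis by blast
qed

lemma hn_lip: "monomer_adj E a b \<Longrightarrow> hn b \<le> hn a + 1"
proof -
  assume ab: "monomer_adj E a b"
  define da where "da = gdist (monomer_adj E) 0 a"
  define db where "db = gdist (monomer_adj E) 0 b"
  have le: "db \<le> da + 1" using gdist_step[of "monomer_adj E" a b, OF ab] by (simp add: da_def db_def)
  show ?thesis
  proof (cases "da \<le> enat M")
    case True
    then obtain x where x: "da = enat x" "x \<le> M" by (cases da) auto
    then have ha: "hn a = x" by (simp add: hn_def da_def[symmetric])
    have "db \<le> enat (x + 1)" using le x by (simp add: one_enat_def)
    then show ?thesis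
      using ha x by (cases db) (auto simp: hn_def db_def[symmetric])
  next
    case False
    then have "hn a = M" by (simp add: hn_def da_def[symmetric])
    moreover have "hn b \<le> M" by (cases db) (auto simp: hn_def db_def[symmetric])
    ultimately show ?thesis by simp
  qed
qed

lemma hn0: "hn 0 = 0"
proof -
  have "gdist (monomer_adj E) 0 0 = enat 0" by (simp add: gdist_refl zero_enat_def)
  then show ?thesis by (simp add: hn_def)
qed

lemma hnn: "hn (n - 1) = M"
  using far by (simp add: hn_def M_def)

lemma phi_lip_edge: "polymer_edge n E i j \<Longrightarrow> \<bar>phi i - phi j\<bar> \<le> 1"
proof -
  assume "polymer_edge n E i j"
  then consider (bond) k a b where "(a, b) \<in> E" "i = k * int n + int a" "j = k * int n + int b"
    | (link) k where "i = k * int n - 1" "j = k * int n"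
    unfolding polymer_edge_def by blast
  then show ?thesis
  proof cases
    case bond
    then have "a < n" "b < n" using Eb by auto
    then have "phi i = k * int M + int (hn a)" "phi j = k * int M + int (hn b)"
      using bond pr_lv_eq by (auto simp: phi_def)
    moreover have "hn b \<le> hn a + 1" "hn a \<le> hn b + 1"
      using hn_lip bond(1) by (auto simp: monomer_adj_def)
    ultimately show ?thesis by simp
  next
    case link
    then have "phi i = (k - 1) * int M + int M" "phi j = k * int M"
      using pr_lv_link pr_lv_base hnn hn0 by (auto simp: phi_def)
    then show ?thesis by (simp add: algebra_simps)
  qed
qed

lemma phi_lip: "polymer_adj n E i j \<Longrightarrow> \<bar>phi i - phi j\<bar> \<le> 1"
  unfolding polymer_adj_def using phi_lip_edge by (metis abs_minus_commute)

lemma phi_walk: "walk (polymer_adj n E) p \<Longrightarrow> \<bar>phi (hd p) - phi (last p)\<bar> \<le> int (length p - 1)"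
proof (induction p)
  case Nil then show ?case by (simp add: walk_def)
next
  case (Cons x q)
  show ?case
  proof (cases q)
    case Nil then show ?thesis by simp
  next
    case (Cons y ys)
    have "polymer_adj n E x y" "walk (polymer_adj n E) q" using Cons.prems Cons by auto
    then have "\<bar>phi x - phi y\<bar> \<le> 1" "\<bar>phi y - phi (last q)\<bar> \<le> int (length q - 1)"
      using phi_lip Cons.IH Cons by auto
    then show ?thesis using Cons by auto
  qed
qed

lemma phi_same_pr: "pr i1 = pr i2 \<Longrightarrow> phi i1 - phi i2 = (lv i1 - lv i2) * int M"
  by (simp add: phi_def algebra_simps)

lemma inj_near:
  assumes "gdist (polymer_adj n E) i1 jt < enat dthres" "gdist (polymer_adj n E) i2 jt < enat dthres"
    and "pr i1 = pr i2"
  shows "i1 = i2"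
proof -
  obtain p1 where p1: "walk (polymer_adj n E) p1" "hd p1 = i1" "last p1 = jt" "length p1 - 1 < dthres"
    using gdist_less_walk[OF assms(1)] by blast
  obtain p2 where p2: "walk (polymer_adj n E) p2" "hd p2 = i2" "last p2 = jt" "length p2 - 1 < dthres"
    using gdist_less_walk[OF assms(2)] by blast
  have "\<bar>phi i1 - phi jt\<bar> \<le> int dthres - 1" "\<bar>phi i2 - phi jt\<bar> \<le> int dthres - 1"
    using phi_walk[OF p1(1)] phi_walk[OF p2(1)] p1 p2 by fastforce+
  then have "\<bar>(lv i1 - lv i2) * int M\<bar> < int M"
    using phi_same_pr[OF assms(3)] d1 by (simp add: M_def)
  then have "\<bar>lv i1 - lv i2\<bar> * int M < 1 * int M" by (simp add: abs_mult)
  then have "\<bar>lv i1 - lv i2\<bar> < 1" by (rule mult_right_less_imp_less) simp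
  then have "lv i1 = lv i2" by simp
  then show ?thesis using decomp[of i1] decomp[of i2] assms(3) by metis
qed

end

context poly_setup begin

lemma back_lift:
  assumes "walk (star_adj n E) q" "hd q = a" "last q = pr jt" "length q - 1 < dthres"
  shows "\<exists>p. walk (polymer_adj n E) p \<and> last p = jt \<and> map pr p = q \<and> pr (hd p) = a
     \<and> gdist (polymer_adj n E) (hd p) jt < enat dthres"
proof -
  obtain p where p: "walk (polymer_adj n E) p" "last p = jt" "map pr p = q"
    using lift_back[OF assms(1,3)] by blast
  have "p \<noteq> []" using p by (simp add: walk_def)
  have "pr (hd p) = a" using p(3) assms(2) \<open>p \<noteq> []\<close> by (metis hd_map)
  moreover have "gdist (polymer_adj n E) (hd p) jt \<le> enat (length p - 1)"
    using gdist_le[OF p(1) refl p(2)] .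
  moreover have "length p = length q" using p(3) by auto
  ultimately show ?thesis using p assms(4) by (metis enat_ord_simps(2) order.strict_trans1)
qed

lemma dist_eq:
  assumes A: "gdist (polymer_adj n E) i jt < enat dthres"
  shows "gdist (star_adj n E) (pr i) (pr jt) = gdist (polymer_adj n E) i jt"
proof -
  obtain p where p: "walk (polymer_adj n E) p" "hd p = i" "last p = jt" "length p - 1 < dthres"
     "enat (length p - 1) = gdist (polymer_adj n E) i jt"
    using gdist_less_walk[OF A] by blast
  have "p \<noteq> []" using p by (simp add: walk_def)
  have le1: "gdist (star_adj n E) (pr i) (pr jt) \<le> gdist (polymer_adj n E) i jt"
    using gdist_le[OF proj_walk[OF p(1)]] p \<open>p \<noteq> []\<close> by (simp add: hd_map last_map)
  have G: "gdist (star_adj n E) (pr i) (pr jt) < enat dthres" using le_less_trans[OF le1 A] .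
  obtain q where q: "walk (star_adj n E) q" "hd q = pr i" "last q = pr jt" "length q - 1 < dthres"
     "enat (length q - 1) = gdist (star_adj n E) (pr i) (pr jt)"
    using gdist_less_walk[OF G] by blast
  obtain p' where p': "walk (polymer_adj n E) p'" "last p' = jt" "map pr p' = q" "pr (hd p') = pr i"
     "gdist (polymer_adj n E) (hd p') jt < enat dthres"
    using back_lift[OF q(1-4)] by blast
  have "hd p' = i" using inj_near[OF p'(5) A p'(4)] .
  have "gdist (polymer_adj n E) i jt \<le> enat (length p' - 1)"
    using gdist_le[OF p'(1) \<open>hd p' = i\<close> p'(2)] .
  also have "\<dots> = gdist (star_adj n E) (pr i) (pr jt)" using p'(3) q(5) by auto
  finally show ?thesis using le1 by simp
qed

lemma bij:
  "bij_betw pr {i. gdist (polymer_adj n E) i jt < enat dthres}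
                {a. gdist (star_adj n E) a (pr jt) < enat dthres}"
proof (rule bij_betwI')
  fix x y assume "x \<in> {i. gdist (polymer_adj n E) i jt < enat dthres}"
    "y \<in> {i. gdist (polymer_adj n E) i jt < enat dthres}"
  then show "(pr x = pr y) = (x = y)" using inj_near[of x jt y] by auto
next
  fix x assume "x \<in> {i. gdist (polymer_adj n E) i jt < enat dthres}"
  then show "pr x \<in> {a. gdist (star_adj n E) a (pr jt) < enat dthres}" using dist_eq[of x jt] by simp
next
  fix a assume "a \<in> {a. gdist (star_adj n E) a (pr jt) < enat dthres}"
  then have G: "gdist (star_adj n E) a (pr jt) < enat dthres" by simp
  obtain q where q: "walk (star_adj n E) q" "hd q = a" "last q = pr jt" "length q - 1 < dthres"
    using gdist_less_walk[OF G] by blast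
  obtain p where "pr (hd p) = a" "gdist (polymer_adj n E) (hd p) jt < enat dthres"
    using back_lift[OF q] by blast
  then show "\<exists>x\<in>{i. gdist (polymer_adj n E) i jt < enat dthres}. a = pr x" by auto
qed

lemma path_attr_pr:
  "path_attr (\<lambda>i. x (pr i)) (polymer_eattr n ea) p = path_attr x ea (map pr p)"
  by (simp add: path_attr_def polymer_eattr_def pr_def map_tl[symmetric] zip_map_map case_prod_beta)

lemma sp_eq:
  assumes A: "gdist (polymer_adj n E) i jt < enat dthres"
  shows "sp_attrs (polymer_adj n E) (polymer_eattr n ea) (\<lambda>i. x (pr i)) i jt
       = sp_attrs (star_adj n E) ea x (pr i) (pr jt)"
proof -
  let ?SP = "{p. walk (polymer_adj n E) p \<and> hd p = i \<and> last p = jt \<and>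
                 enat (length p - 1) = gdist (polymer_adj n E) i jt}"
  let ?SS = "{q. walk (star_adj n E) q \<and> hd q = pr i \<and> last q = pr jt \<and>
                 enat (length q - 1) = gdist (star_adj n E) (pr i) (pr jt)}"
  have DE: "gdist (star_adj n E) (pr i) (pr jt) = gdist (polymer_adj n E) i jt" using dist_eq[OF A] .
  have "map pr ` ?SP = ?SS"
  proof
    show "map pr ` ?SP \<subseteq> ?SS"
    proof
      fix q assume "q \<in> map pr ` ?SP"
      then obtain p where p: "p \<in> ?SP" "q = map pr p" by blast
      have "p \<noteq> []" using p by (simp add: walk_def)
      then show "q \<in> ?SS" using p proj_walk DE by (auto simp: hd_map last_map)
    qed
  next
    show "?SS \<subseteq> map pr ` ?SP"
    proof
      fix q assume q: "q \<in> ?SS"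
      then have "length q - 1 < dthres" using A DE by (metis (mono_tags, lifting) enat_ord_simps(2) mem_Collect_eq)
      then obtain p where p: "walk (polymer_adj n E) p" "last p = jt" "map pr p = q" "pr (hd p) = pr i"
        "gdist (polymer_adj n E) (hd p) jt < enat dthres"
        using back_lift[of q "pr i" jt] q by blast
      have "hd p = i" using inj_near[OF p(5) A p(4)] .
      moreover have "length p = length q" using p(3) by auto
      ultimately have "p \<in> ?SP" using p q DE by auto
      then show "q \<in> map pr ` ?SP" using p(3) by blast
    qed
  qed
  note MS = this
  have "sp_attrs (polymer_adj n E) (polymer_eattr n ea) (\<lambda>i. x (pr i)) i jt
      = (\<lambda>p. path_attr x ea (map pr p)) ` ?SP"
    unfolding sp_attrs_def by (rule image_cong[OF refl path_attr_pr])
  also have "\<dots> = path_attr x ea ` (map pr ` ?SP)" by (rule image_image[symmetric])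
  also have "\<dots> = sp_attrs (star_adj n E) ea x (pr i) (pr jt)"
    unfolding MS sp_attrs_def ..
  finally show ?thesis .
qed

lemma logit_eq:
  assumes A: "gdist (polymer_adj n E) i jt < enat dthres"
  shows "lga_logit (polymer_adj n E) (polymer_eattr n ea) WQ WK fd fp (\<lambda>i. x (pr i)) i jt
       = lga_logit (star_adj n E) ea WQ WK fd fp x (pr i) (pr jt)"
  unfolding lga_logit_def using sp_eq[where ea=ea and x=x, OF A] dist_eq[OF A] by simp

lemma lga_eq:
  "lga (polymer_adj n E) (polymer_eattr n ea) dthres WQ WK WV fd fp (\<lambda>i. x (pr i)) jt
   = lga (star_adj n E) ea dthres WQ WK WV fd fp x (pr jt)"
proof -
  let ?NP = "{i. gdist (polymer_adj n E) i jt < enat dthres}"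
  let ?NS = "{a. gdist (star_adj n E) a (pr jt) < enat dthres}"
  let ?LP = "\<lambda>i. lga_logit (polymer_adj n E) (polymer_eattr n ea) WQ WK fd fp (\<lambda>i. x (pr i)) i jt"
  let ?LS = "\<lambda>a. lga_logit (star_adj n E) ea WQ WK fd fp x a (pr jt)"
  have Z: "(\<Sum>i\<in>?NP. exp (?LP i)) = (\<Sum>a\<in>?NS. exp (?LS a))"
  proof -
    have "(\<Sum>i\<in>?NP. exp (?LP i)) = (\<Sum>i\<in>?NP. exp (?LS (pr i)))"
      using logit_eq by (intro sum.cong) auto
    also have "\<dots> = (\<Sum>a\<in>?NS. exp (?LS a))"
      using sum.reindex_bij_betw[OF bij, of "\<lambda>a. exp (?LS a)"] by simp
    finally show ?thesis .
  qed
  let ?Z = "(\<Sum>a\<in>?NS. exp (?LS a))"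
  have "(\<Sum>i\<in>?NP. (exp (?LP i) / ?Z) *\<^sub>R (WV *v x (pr i)))
      = (\<Sum>i\<in>?NP. (exp (?LS (pr i)) / ?Z) *\<^sub>R (WV *v x (pr i)))"
    using logit_eq by (intro sum.cong) auto
  also have "\<dots> = (\<Sum>a\<in>?NS. (exp (?LS a) / ?Z) *\<^sub>R (WV *v x a))"
    using sum.reindex_bij_betw[OF bij, of "\<lambda>a. (exp (?LS a) / ?Z) *\<^sub>R (WV *v x a)"] by simp
  finally show ?thesis unfolding lga_def lga_nbhd_def Let_def using Z by simp
qed

lemma run_eq:
  "run_layers (polymer_adj n E) (polymer_eattr n ea) dthres Ls (\<lambda>i. x (pr i))
   = (\<lambda>i. run_layers (star_adj n E) ea dthres Ls x (pr i))"
proof (induction Ls arbitrary: x)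
  case Nil then show ?case by simp
next
  case (Cons L Ls)
  show ?case
  proof (cases L)
    case (LGA WQ WK WV fd fp)
    have "apply_layer (polymer_adj n E) (polymer_eattr n ea) dthres L (\<lambda>i. x (pr i))
        = (\<lambda>i. apply_layer (star_adj n E) ea dthres L x (pr i))"
      using LGA lga_eq[where ea=ea and x=x] by (auto simp: fun_eq_iff)
    then show ?thesis using Cons.IH by simp
  next
    case (Nodewise f)
    then show ?thesis using Cons.IH[of "\<lambda>v. f (x v)"] by simp
  qed
qed

end
theorem theorem2:
  fixes n :: nat and E :: "(nat \<times> nat) set"
    and X :: "nat \<Rightarrow> real^'d" and ea :: "nat \<Rightarrow> nat \<Rightarrow> 'e"
    and dthres :: nat and Ls :: "('d, 'e) layer list"
  assumes "0 < n"
    and "\<forall>(a, b) \<in> E. a < n \<and> b < n"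
    and "1 \<le> dthres"
    and "gdist (monomer_adj E) 0 (n - 1) > enat (2 * dthres - 1)"
  shows "pool_polymer n (run_layers (polymer_adj n E) (polymer_eattr n ea) dthres Ls (polymer_feat n X))
       = pool_star n (run_layers (star_adj n E) ea dthres Ls X)"
proof -
  have "n \<noteq> 1"
  proof
    assume "n = 1"
    then have "gdist (monomer_adj E) 0 (n - 1) = 0" by (simp add: gdist_refl)
    then show False using assms(4) by (simp add: zero_enat_def)
  qed
  then have "2 \<le> n" using assms(1) by simp
  then interpret poly_setup n E dthres using assms by (intro poly_setup.intro) simp_all
  have feat: "polymer_feat n X = (\<lambda>i. X (pr i))" by (simp add: polymer_feat_def pr_def fun_eq_iff)
  have pi: "\<And>i. i < n \<Longrightarrow> pr (int i) = i" using pr_lv_eq[of _ 0] by simp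
  have "(\<Sum>i<n. run_layers (star_adj n E) ea dthres Ls X (pr (int i)))
      = (\<Sum>i<n. run_layers (star_adj n E) ea dthres Ls X i)"
    by (rule sum.cong) (simp_all add: pi)
  then show ?thesis unfolding feat run_eq pool_polymer_def pool_star_def by simp
qed

end
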